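(* Let $C_0\ge1$. There exists a constant $C_1=C_1(C_0)\ge1$ such that for all $x_1,x_2>0$ and $\kappa_1,\kappa_2\in(0,1)$ satisfying $$\frac{x_1}{x_2},\ \frac{\kappa_1}{\kappa_2},\ \frac{1-\kappa_1}{1-\kappa_2}\in\Big[\frac1{C_0},C_0\Big],$$ we have $$\frac1{C_1}\le\frac{H_{\kappa_1}(x_1)-1}{H_{\kappa_2}(x_2)-1}\le C_1.$$
   Context: For $\kappa\in(0,1)$ let $G_\kappa:[1,\infty)\to[0,\infty)$, $G_\kappa(x)=\sqrt{x^2-1}-\kappa\ln(x+\sqrt{x^2-1})$ (a strictly increasing bijection) and $H_\kappa=G_\kappa^{-1}:[0,\infty)\to[1,\infty)$. *)

theory Defs
  imports "HOL-Analysis.Analysis"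
begin

definition G :: "real \<Rightarrow> real \<Rightarrow> real" where
  "G \<kappa> x = sqrt (x\<^sup>2 - 1) - \<kappa> * ln (x + sqrt (x\<^sup>2 - 1))"

definition H :: "real \<Rightarrow> real \<Rightarrow> real" where
  "H \<kappa> y = (THE x. x \<ge> 1 \<and> G \<kappa> x = y)"

end

theory Submission
  imports Defs
begin

lemma sinh_sub_ge:
  fixes a b :: real
  assumes "0 \<le> a" "a \<le> b"
  shows "b - a \<le> sinh b - sinh a"
proof -
  have "(\<lambda>t. sinh t - t) a \<le> (\<lambda>t. sinh t - t) b"
    by (rule DERIV_nonneg_imp_nondecreasing[OF assms(2)])
       (auto intro!: derivative_eq_intros simp: cosh_real_ge_1)
  thus ?thesis by simp
qed

lemma sinh_ge_self: "0 \<le> (t::real) \<Longrightarrow> t \<le> sinh t"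
  using sinh_sub_ge[of 0 t] by simp

lemma cosh_ge_self: "0 \<le> (t::real) \<Longrightarrow> t \<le> cosh t"
  using sinh_ge_self[of t] sinh_le_cosh_real[of t] by linarith

lemma F_strict:
  fixes a b k :: real
  assumes "k < 1" "0 \<le> a" "a < b"
  shows "sinh a - k * a < sinh b - k * b"
proof -
  have "b - a \<le> sinh b - sinh a" using sinh_sub_ge assms by simp
  moreover have "k * (b - a) < b - a" using assms by simp
  ultimately show ?thesis by (simp add: algebra_simps)
qed

lemma F_ge: "k < 1 \<Longrightarrow> 0 \<le> (t::real) \<Longrightarrow> (1 - k) * t \<le> sinh t - k * t"
  using sinh_ge_self[of t] by (simp add: algebra_simps)

lemma G_arcosh: "x \<ge> 1 \<Longrightarrow> G k x = sinh (arcosh x) - k * arcosh x"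
proof -
  assume x: "x \<ge> 1"
  have e1: "sinh (arcosh x) = sqrt (x^2 - 1)" using sinh_arcosh_real[OF x] .
  have e2: "arcosh x = ln (x + sqrt (x^2 - 1))" using arcosh_real_def[OF x] .
  show ?thesis by (simp add: G_def e1 flip: e2)
qed

lemma G_cosh: "0 \<le> t \<Longrightarrow> G k (cosh t) = sinh t - k * t"
  using G_arcosh[of "cosh t" k] by (simp add: cosh_real_ge_1 arcosh_cosh_real)

lemma H_char:
  fixes k t :: real
  assumes "k < 1" "0 \<le> t"
  shows "H k (sinh t - k * t) = cosh t"
  unfolding H_def
proof (rule the_equality)
  show "1 \<le> cosh t \<and> G k (cosh t) = sinh t - k * t"
    using assms G_cosh cosh_real_ge_1 by auto
next
  fix x assume x: "1 \<le> x \<and> G k x = sinh t - k * t"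
  define a where "a = arcosh x"
  have a0: "0 \<le> a" using x a_def by simp
  have eq: "sinh a - k * a = sinh t - k * t" using x G_arcosh[of x k] unfolding a_def by auto
  have "a = t"
  proof (rule ccontr)
    assume "a \<noteq> t"
    then consider "a < t" | "t < a" by linarith
    thus False
      using F_strict[OF assms(1) a0, of t] F_strict[OF assms(1) assms(2), of a] eq by cases auto
  qed
  moreover have "x = cosh (arcosh x)" using x by simp
  ultimately show "x = cosh t" using a_def by simp
qed

lemma F_exists:
  fixes k y :: real
  assumes "0 < k" "k < 1" "0 \<le> y"
  shows "\<exists>t\<ge>0. sinh t - k * t = y"
proof -
  define b where "b = y / (1 - k)"
  have b0: "0 \<le> b" using assms b_def by simp
  have "y \<le> sinh b - k * b"
    using F_ge[OF assms(2) b0] assms b_def by simp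
  moreover have "sinh 0 - k * 0 \<le> y" using assms by simp
  moreover have "\<forall>x. 0 \<le> x \<and> x \<le> b \<longrightarrow> isCont (\<lambda>t. sinh t - k * t) x"
    by (auto intro!: continuous_intros)
  ultimately obtain t where "0 \<le> t" "t \<le> b" "sinh t - k * t = y"
    using IVT[of "\<lambda>t. sinh t - k * t" 0 y b] b0 by auto
  thus ?thesis by auto
qed

lemma sinh_scale:
  fixes l t :: real
  assumes "1 \<le> l" "0 \<le> t"
  shows "l * sinh t \<le> sinh (l * t)"
proof -
  have "(\<lambda>t. sinh (l * t) - l * sinh t) 0 \<le> (\<lambda>t. sinh (l * t) - l * sinh t) t"
  proof (rule DERIV_nonneg_imp_nondecreasing[OF assms(2)])
    fix x :: real assume x: "0 \<le> x" "x \<le> t"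
    have "cosh x \<le> cosh (l * x)"
      using x assms by (subst cosh_real_nonneg_le_iff) (auto intro: mult_right_mono[of 1 l x, simplified])
    hence "0 \<le> cosh (l * x) * l - l * cosh x"
      using assms by (simp add: algebra_simps mult_left_mono)
    moreover have "DERIV (\<lambda>t. sinh (l * t) - l * sinh t) x :> cosh (l * x) * l - l * cosh x"
      by (auto intro!: derivative_eq_intros)
    ultimately show "\<exists>y. DERIV (\<lambda>t. sinh (l * t) - l * sinh t) x :> y \<and> 0 \<le> y" by blast
  qed
  thus ?thesis by simp
qed

lemma sinh_le_mult_cosh:
  fixes z :: real
  assumes "0 \<le> z"
  shows "sinh z \<le> z * cosh z"
proof -
  have "(\<lambda>t. t * cosh t - sinh t) 0 \<le> (\<lambda>t. t * cosh t - sinh t) z"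
  proof (rule DERIV_nonneg_imp_nondecreasing[OF assms])
    fix x :: real assume x: "0 \<le> x" "x \<le> z"
    have "DERIV (\<lambda>t. t * cosh t - sinh t) x :> x * sinh x"
      by (auto intro!: derivative_eq_intros simp: algebra_simps)
    moreover have "0 \<le> x * sinh x" using x by simp
    ultimately show "\<exists>y. DERIV (\<lambda>t. t * cosh t - sinh t) x :> y \<and> 0 \<le> y" by blast
  qed
  thus ?thesis by simp
qed

lemma cosh_half: "cosh (x::real) - 1 = 2 * sinh (x / 2) ^ 2"
proof -
  have "cosh x = cosh (2 * (x / 2))" by simp
  also have "\<dots> = cosh (x/2) ^ 2 + sinh (x/2) ^ 2" by (rule cosh_double)
  finally show ?thesis using cosh_square_eq[of "x/2"] by simp
qed

definition KK :: "real \<Rightarrow> real" where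
  "KK C = (C^2)^2 * cosh (C^2) ^ 2 + 2 * exp (C^2)"

lemma KK_ge: "1 \<le> KK C"
proof -
  have "1 \<le> exp (C^2)" by simp
  moreover have "0 \<le> (C^2)^2 * cosh (C^2) ^ 2" by simp
  ultimately show ?thesis unfolding KK_def by linarith
qed

lemma one_dir:
  fixes k1 k2 t1 t2 C :: real
  assumes k: "0 < k1" "k1 < 1" "0 < k2" "k2 < 1"
    and t: "0 \<le> t1" "0 \<le> t2" and C: "1 \<le> C"
    and y: "sinh t1 - k1 * t1 \<le> C * (sinh t2 - k2 * t2)"
    and kk: "1 - k2 \<le> C * (1 - k1)"
  shows "cosh t1 - 1 \<le> KK C * (cosh t2 - 1)"
proof -
  define l where "l = C^2"
  have l1: "1 \<le> l" using C l_def by (simp add: one_le_power)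
  define F where "F = (\<lambda>t. sinh t - k2 * t)"
  have st1: "0 \<le> sinh t1 - t1" using sinh_ge_self[OF t(1)] by simp
  have y2: "0 \<le> F t2" using F_ge[OF k(4) t(2)] k unfolding F_def
    by (smt (verit) mult_nonneg_nonneg t(2))
  have "F t1 = (1 - k2) * t1 + (sinh t1 - t1)" unfolding F_def by (simp add: algebra_simps)
  also have "\<dots> \<le> C * (1 - k1) * t1 + C * (sinh t1 - t1)"
    using kk t(1) st1 C by (intro add_mono mult_right_mono) (auto intro: mult_right_mono[of 1 C, simplified])
  also have "\<dots> = C * (sinh t1 - k1 * t1)" by (simp add: algebra_simps)
  also have "\<dots> \<le> C * (C * F t2)" using y C unfolding F_def by (intro mult_left_mono) auto
  finally have Ft1: "F t1 \<le> l * F t2" unfolding l_def by (simp add: power2_eq_square)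
  have A: "t1 \<le> l * t2"
  proof (rule ccontr)
    assume "\<not> ?thesis"
    hence "F (l * t2) < F t1" unfolding F_def using k t l1 by (intro F_strict) auto
    moreover have "l * F t2 \<le> F (l * t2)"
      using sinh_scale[OF l1 t(2)] unfolding F_def by (simp add: algebra_simps)
    ultimately show False using Ft1 by linarith
  qed
  have B: "t1 \<le> t2 + l"
  proof (rule ccontr)
    assume "\<not> ?thesis"
    hence "F (t2 + l) < F t1" unfolding F_def using k t l1 by (intro F_strict) auto
    moreover have "l * F t2 \<le> F (t2 + l)"
    proof -
      have "F (t2 + l) = sinh t2 * cosh l + cosh t2 * sinh l - k2 * t2 - k2 * l"
        unfolding F_def by (simp add: sinh_add algebra_simps)
      moreover have "l * sinh t2 \<le> sinh t2 * cosh l"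
        using cosh_ge_self[of l] l1 t(2) by (simp add: mult_right_mono mult.commute)
      moreover have "l \<le> cosh t2 * sinh l"
        using sinh_ge_self[of l] l1 cosh_real_ge_1[of t2]
          mult_mono[of 1 "cosh t2" l "sinh l"] by simp
      moreover have "0 \<le> k2 * t2 * (l - 1)" using k t l1 by simp
      moreover have "0 \<le> l * (1 - k2)" using k l1 by simp
      ultimately show ?thesis unfolding F_def by (simp add: algebra_simps)
    qed
    ultimately show False using Ft1 by linarith
  qed
  show ?thesis
  proof (cases "t2 \<le> 2")
    case True
    define a where "a = t2 / 2"
    have a0: "0 \<le> a" "a \<le> 1" using t True a_def by auto
    have "sinh (t1 / 2) \<le> sinh (l * a)" using A unfolding a_def by (simp add: algebra_simps)
    also have "\<dots> \<le> l * a * cosh (l * a)" using sinh_le_mult_cosh[of "l * a"] l1 a0 by simp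
    also have "\<dots> \<le> l * a * cosh l"
    proof -
      have "l * a \<le> l" using l1 a0 by (simp add: mult_left_le)
      hence "cosh (l * a) \<le> cosh l" using l1 a0 by (subst cosh_real_nonneg_le_iff) auto
      thus ?thesis using l1 a0 by (intro mult_left_mono) auto
    qed
    also have "\<dots> \<le> l * cosh l * sinh a"
      using sinh_ge_self[OF a0(1)] l1 by (simp add: mult.assoc mult.left_commute mult_left_mono)
    finally have s: "sinh (t1 / 2) \<le> l * cosh l * sinh a" .
    have s0: "0 \<le> sinh (t1 / 2)" using t by simp
    have "sinh (t1 / 2) ^ 2 \<le> (l * cosh l * sinh a) ^ 2"
      using s s0 by (intro power_mono) auto
    hence "cosh t1 - 1 \<le> l^2 * cosh l ^ 2 * (cosh t2 - 1)"
      using cosh_half[of t1] cosh_half[of t2] a_def by (simp add: power_mult_distrib)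
    also have "\<dots> \<le> KK C * (cosh t2 - 1)"
      using cosh_real_ge_1[of t2] unfolding KK_def l_def
      by (intro mult_right_mono) auto
    finally show ?thesis .
  next
    case False
    have c2: "2 \<le> cosh t2" using cosh_ge_self[of t2] False by simp
    have "cosh t1 \<le> cosh (t2 + l)" using B t l1 by (subst cosh_real_nonneg_le_iff) auto
    also have "\<dots> = cosh t2 * cosh l + sinh t2 * sinh l" by (simp add: cosh_add)
    also have "\<dots> \<le> cosh t2 * cosh l + cosh t2 * sinh l"
      using sinh_le_cosh_real[of t2] l1 by (intro add_left_mono mult_right_mono) auto
    also have "\<dots> = cosh t2 * exp l" by (simp add: algebra_simps flip: cosh_plus_sinh)
    finally have "cosh t1 - 1 \<le> cosh t2 * exp l" by simp
    also have "\<dots> \<le> 2 * exp l * (cosh t2 - 1)" using c2 by (simp add: algebra_simps)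
    also have "\<dots> \<le> KK C * (cosh t2 - 1)"
      using c2 unfolding KK_def l_def by (intro mult_right_mono) auto
    finally show ?thesis .
  qed
qed

theorem lemma2p11:
  fixes C0 :: real
  assumes "C0 \<ge> 1"
  shows "\<exists>C1::real. C1 \<ge> 1 \<and>
    (\<forall>x1 x2 \<kappa>1 \<kappa>2. x1 > 0 \<longrightarrow> x2 > 0 \<longrightarrow>
       0 < \<kappa>1 \<longrightarrow> \<kappa>1 < 1 \<longrightarrow> 0 < \<kappa>2 \<longrightarrow> \<kappa>2 < 1 \<longrightarrow>
       x1 / x2 \<in> {1/C0..C0} \<longrightarrow> \<kappa>1 / \<kappa>2 \<in> {1/C0..C0} \<longrightarrow>
       (1 - \<kappa>1) / (1 - \<kappa>2) \<in> {1/C0..C0} \<longrightarrow>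
       1 / C1 \<le> (H \<kappa>1 x1 - 1) / (H \<kappa>2 x2 - 1) \<and>
       (H \<kappa>1 x1 - 1) / (H \<kappa>2 x2 - 1) \<le> C1)"
proof (intro exI[of _ "KK C0"] conjI KK_ge allI impI)
  fix x1 x2 k1 k2 :: real
  assume x: "x1 > 0" "x2 > 0" and k: "0 < k1" "k1 < 1" "0 < k2" "k2 < 1"
    and r1: "x1 / x2 \<in> {1/C0..C0}" and "k1 / k2 \<in> {1/C0..C0}"
    and r3: "(1 - k1) / (1 - k2) \<in> {1/C0..C0}"
  have C0: "0 < C0" using assms by simp
  obtain t1 where t1: "0 \<le> t1" "sinh t1 - k1 * t1 = x1" using F_exists[of k1 x1] x k by auto
  obtain t2 where t2: "0 \<le> t2" "sinh t2 - k2 * t2 = x2" using F_exists[of k2 x2] x k by auto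
  have H1: "H k1 x1 = cosh t1" using H_char[of k1 t1] t1 k by simp
  have H2: "H k2 x2 = cosh t2" using H_char[of k2 t2] t2 k by simp
  have "t1 \<noteq> 0" using t1 x by auto
  hence u1: "0 < cosh t1 - 1" using cosh_real_ge_1[of t1] cosh_real_one_iff[of t1] by linarith
  have "t2 \<noteq> 0" using t2 x by auto
  hence u2: "0 < cosh t2 - 1" using cosh_real_ge_1[of t2] cosh_real_one_iff[of t2] by linarith
  have xa: "x1 \<le> C0 * x2" using r1 x by (simp add: divide_le_eq)
  have xb: "x2 \<le> C0 * x1" using r1 x C0 by (simp add: le_divide_eq field_simps)
  have ka: "1 - k1 \<le> C0 * (1 - k2)" using r3 k by (simp add: divide_le_eq)
  have kb: "1 - k2 \<le> C0 * (1 - k1)" using r3 k C0 by (simp add: le_divide_eq field_simps)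
  have d1: "cosh t1 - 1 \<le> KK C0 * (cosh t2 - 1)"
    using one_dir[OF k t1(1) t2(1) assms] xa kb t1 t2 by simp
  have d2: "cosh t2 - 1 \<le> KK C0 * (cosh t1 - 1)"
    using one_dir[of k2 k1 t2 t1 C0] k t1 t2 assms xb ka by simp
  have K0: "0 < KK C0" using KK_ge[of C0] by simp
  show "(H k1 x1 - 1) / (H k2 x2 - 1) \<le> KK C0"
    using d1 u2 by (simp add: H1 H2 divide_le_eq)
  show "1 / KK C0 \<le> (H k1 x1 - 1) / (H k2 x2 - 1)"
    using d2 u2 K0 by (simp add: H1 H2 divide_le_eq le_divide_eq mult.commute)
qed

end
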